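(* For every set $E\subset\mathbb R^+$, $$\mathrm{Dim}_\mathrm{H}E=\inf\Big\{\rho\ge0:\sum_{n\ge1}\widetilde\nu^n_\rho(E)<\infty\Big\},$$ where for $n\ge1$ and $\rho\ge0$, $$\widetilde\nu^n_\rho(E)=\inf\Big\{\sum_{i=1}^m\Big(\frac{|Q_i|}{2^n}\Big)^\rho: Q_i\subset\mathcal S_n \text{ intervals with integer endpoints},\ \frac{|Q_i|}{n^2}\in\mathbb N^*,\ E\cap\mathcal S_n\subset\bigcup_{i=1}^m Q_i\Big\}$$ (infimum over finite families).
   Context: $|Q|$ denotes the length of an interval $Q$, and $\mathbb N^*$ the positive integers. Let $\mathcal S_n=[2^{n-1},2^n)$ for $n\ge1$. For $E\subset\mathbb R^+$, $\rho\ge0$ and $n\ge1$, let $$\nu^n_\rho(E)=\inf\Big\{\sum_{i=1}^m\Big(\frac{|Q_i|}{2^n}\Big)^\rho: Q_i\subset\mathcal S_n \text{ non-trivial intervals with integer endpoints},\ E\cap\mathcal S_n\subset\bigcup_{i=1}^m Q_i\Big\},$$ the infimum being over finite families. The macroscopic Hausdorff dimension is $\mathrm{Dim}_\mathrm{H}E=\inf\{\rho\ge0:\sum_{n\ge1}\nu^n_\rho(E)<\infty\}$. *)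

theory Defs
  imports "HOL-Analysis.Analysis"
begin

definition shell :: "nat \<Rightarrow> real set" where
  "shell n = {2 ^ (n - 1) ..< 2 ^ n}"

text \<open>Non-trivial interval (open, closed or half-open) with integer endpoints a < b.\<close>
definition int_interval :: "real set \<Rightarrow> bool" where
  "int_interval Q \<longleftrightarrow>
     (\<exists>a b :: int. a < b \<and> {real_of_int a <..< real_of_int b} \<subseteq> Q
                   \<and> Q \<subseteq> {real_of_int a .. real_of_int b})"

definition ilen :: "real set \<Rightarrow> real" where
  "ilen Q = Sup Q - Inf Q"

text \<open>nu^n_rho(E), valued in [0,\<infinity>] (Inf of the empty set is \<infinity>).\<close>
definition nu :: "nat \<Rightarrow> real \<Rightarrow> real set \<Rightarrow> ennreal" where
  "nu n \<rho> E = Inf {ennreal (\<Sum>Q\<in>QQ. (ilen Q / 2 ^ n) powr \<rho>) | QQ.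
      finite QQ \<and> (\<forall>Q\<in>QQ. int_interval Q \<and> Q \<subseteq> shell n) \<and> E \<inter> shell n \<subseteq> \<Union>QQ}"

definition nu_tilde :: "nat \<Rightarrow> real \<Rightarrow> real set \<Rightarrow> ennreal" where
  "nu_tilde n \<rho> E = Inf {ennreal (\<Sum>Q\<in>QQ. (ilen Q / 2 ^ n) powr \<rho>) | QQ.
      finite QQ \<and> (\<forall>Q\<in>QQ. int_interval Q \<and> Q \<subseteq> shell n
                        \<and> (\<exists>k::nat. k \<ge> 1 \<and> ilen Q = real k * real n ^ 2))
      \<and> E \<inter> shell n \<subseteq> \<Union>QQ}"

text \<open>Macroscopic Hausdorff dimension (extended real; Inf of empty set is \<infinity>).\<close>
definition DimH :: "real set \<Rightarrow> ereal" where
  "DimH E = Inf {ereal \<rho> | \<rho>. \<rho> \<ge> 0 \<and> (\<Sum>n. nu (Suc n) \<rho> E) < \<infinity>}"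

end

theory Submission
  imports Defs "HOL-Real_Asymp.Real_Asymp"
begin

lemma sandwich_sup_inf:
  fixes c d :: real
  assumes cd: "c < d" and s1: "{c<..<d} \<subseteq> S" and s2: "S \<subseteq> {c..d}"
  shows "Sup S = d" "Inf S = c"
proof -
  have "(c + d) / 2 \<in> {c<..<d}" using cd by simp
  then have ne: "S \<noteq> {}" using s1 by blast
  show "Sup S = d"
  proof (rule cSup_eq_non_empty[OF ne])
    show "\<And>x. x \<in> S \<Longrightarrow> x \<le> d" using s2 by auto
    fix y assume y: "\<And>x. x \<in> S \<Longrightarrow> x \<le> y"
    show "d \<le> y"
    proof (rule ccontr)
      assume "\<not> d \<le> y"
      define z where "z = (max y c + d) / 2"
      have m1: "max y c < d" using \<open>\<not> d \<le> y\<close> cd by simp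
      have "c \<le> max y c" "y \<le> max y c" by simp_all
      moreover have zz: "2 * z = max y c + d" unfolding z_def by simp
      ultimately have "c < z" "z < d" "y < z" using m1 by linarith+
      then have "z \<in> {c<..<d}" by simp
      then have "z \<le> y" using y s1 by blast
      then show False using \<open>y < z\<close> by simp
    qed
  qed
  show "Inf S = c"
  proof (rule cInf_eq_non_empty[OF ne])
    show "\<And>x. x \<in> S \<Longrightarrow> c \<le> x" using s2 by auto
    fix y assume y: "\<And>x. x \<in> S \<Longrightarrow> y \<le> x"
    show "y \<le> c"
    proof (rule ccontr)
      assume "\<not> y \<le> c"
      define z where "z = (min y d + c) / 2"
      have m1: "c < min y d" using \<open>\<not> y \<le> c\<close> cd by simp
      have "min y d \<le> d" "min y d \<le> y" by simp_all
      moreover have zz: "2 * z = min y d + c" unfolding z_def by simp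
      ultimately have "c < z" "z < d" "z < y" using m1 by linarith+
      then have "z \<in> {c<..<d}" by simp
      then have "y \<le> z" using y s1 by blast
      then show False using \<open>z < y\<close> by simp
    qed
  qed
qed

lemma sandwich_ilen:
  fixes c d :: real
  assumes "c < d" "{c<..<d} \<subseteq> S" "S \<subseteq> {c..d}"
  shows "ilen S = d - c"
  using sandwich_sup_inf[OF assms] by (simp add: ilen_def)

lemma endpoints_in_shell:
  fixes a b :: int
  assumes ab: "a < b" and s1: "{real_of_int a<..<real_of_int b} \<subseteq> Q" and Qs: "Q \<subseteq> shell n"
  shows "2 ^ (n - 1) \<le> real_of_int a" "real_of_int b \<le> 2 ^ n"
proof -
  have P: "(2::real) ^ (n - 1) = real_of_int (2 ^ (n - 1))" by simp
  have T: "(2::real) ^ n = real_of_int (2 ^ n)" by simp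
  have ab1: "real_of_int a + 1 \<le> real_of_int b" using ab by linarith
  show "2 ^ (n - 1) \<le> real_of_int a"
  proof (rule ccontr)
    assume "\<not> 2 ^ (n - 1) \<le> real_of_int a"
    then have "a < 2 ^ (n - 1)" unfolding P by linarith
    then have "real_of_int a + 1 \<le> 2 ^ (n - 1)" unfolding P by linarith
    moreover have "real_of_int a + 1/2 \<in> Q" using s1 ab1 by auto
    then have "real_of_int a + 1/2 \<in> shell n" using Qs by blast
    ultimately show False by (auto simp: shell_def)
  qed
  show "real_of_int b \<le> 2 ^ n"
  proof (rule ccontr)
    assume "\<not> real_of_int b \<le> 2 ^ n"
    then have "2 ^ n < b" unfolding T by linarith
    then have "2 ^ n + 1 \<le> real_of_int b" unfolding T by linarith
    moreover have "real_of_int b - 1/2 \<in> Q" using s1 ab1 by auto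
    then have "real_of_int b - 1/2 \<in> shell n" using Qs by blast
    ultimately show False by (auto simp: shell_def)
  qed
qed

definition Jint :: "nat \<Rightarrow> int \<Rightarrow> int \<Rightarrow> real set" where
  "Jint n c d = {real_of_int c .. real_of_int d} \<inter> shell n"

lemma Jint_props:
  assumes cd: "c < d" and c: "2 ^ (n - 1) \<le> real_of_int c" and d: "real_of_int d \<le> 2 ^ n"
  shows "int_interval (Jint n c d)" "Jint n c d \<subseteq> shell n"
        "ilen (Jint n c d) = real_of_int (d - c)"
proof -
  have s1: "{real_of_int c<..<real_of_int d} \<subseteq> Jint n c d"
  proof
    fix x assume "x \<in> {real_of_int c<..<real_of_int d}"
    then have x1: "real_of_int c < x" and x2: "x < real_of_int d" by auto
    have "2 ^ (n - 1) \<le> x" using c x1 by linarith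
    moreover have "x < 2 ^ n" using d x2 by linarith
    ultimately have "x \<in> shell n" unfolding shell_def by simp
    then show "x \<in> Jint n c d" using x1 x2 unfolding Jint_def by simp
  qed
  have s2: "Jint n c d \<subseteq> {real_of_int c..real_of_int d}" by (auto simp: Jint_def)
  show "int_interval (Jint n c d)" unfolding int_interval_def using cd s1 s2 by blast
  show "Jint n c d \<subseteq> shell n" by (auto simp: Jint_def)
  show "ilen (Jint n c d) = real_of_int (d - c)"
    using sandwich_ilen[OF _ s1 s2] cd by simp
qed

lemma sum_UN_le:
  fixes g :: "'a \<Rightarrow> real"
  assumes "finite I" "\<And>i. i \<in> I \<Longrightarrow> finite (F i)" "\<And>x. 0 \<le> g x"
  shows "sum g (\<Union>i\<in>I. F i) \<le> (\<Sum>i\<in>I. sum g (F i))"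
  using assms
proof (induction I rule: finite_induct)
  case empty then show ?case by simp
next
  case (insert i I)
  have fin: "finite (\<Union>i\<in>I. F i)" using insert by auto
  have "sum g (\<Union>j\<in>insert i I. F j) = sum g (F i \<union> (\<Union>j\<in>I. F j))" by simp
  also have "\<dots> \<le> sum g (F i) + sum g (\<Union>j\<in>I. F j)"
    using insert(4)[of i] fin assms(3)
    by (smt (verit, best) insertI1 sum.union_inter sum_nonneg)
  also have "\<dots> \<le> sum g (F i) + (\<Sum>j\<in>I. sum g (F j))"
    using insert by auto
  also have "\<dots> = (\<Sum>j\<in>insert i I. sum g (F j))" using insert by simp
  finally show ?case .
qed

lemma ennreal_le_2_Inf:
  fixes a :: ennreal
  assumes "\<And>x. x \<in> X \<Longrightarrow> a \<le> 2 * x"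
  shows "a \<le> 2 * Inf X"
proof -
  have "a / 2 \<le> Inf X"
  proof (rule Inf_greatest)
    fix x assume "x \<in> X" then have "a \<le> x * 2" using assms by (simp add: mult.commute)
    then have "a / 2 \<le> x * 2 / 2" by (rule divide_right_mono_ennreal)
    also have "\<dots> = x" by (rule ennreal_mult_divide_eq) auto
    finally show "a / 2 \<le> x" .
  qed
  then have "2 * (a / 2) \<le> 2 * Inf X" by (rule mult_left_mono) simp
  moreover have "2 * (a / 2) = a"
    by (simp add: ennreal_times_divide mult.commute[of 2 a] ennreal_mult_divide_eq)
  ultimately show ?thesis by simp
qed

lemma piece:
  fixes a b :: int and n :: nat and \<rho> \<sigma> :: real
  assumes n1: "n \<ge> 1" and nn: "real n ^ 2 * 2 \<le> 2 ^ n"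
    and ab: "a < b" and ea: "2 ^ (n-1) \<le> real_of_int a" and eb: "real_of_int b \<le> 2 ^ n"
    and r0: "0 \<le> \<rho>" and rs: "\<rho> \<le> \<sigma>"
    and H: "(real n ^ 2 / 2 ^ n) powr \<sigma> \<le> (1 / 2 ^ n) powr \<rho>"
  shows "\<exists>F. finite F \<and> card F \<le> 2 \<and> {real_of_int a..real_of_int b} \<inter> shell n \<subseteq> \<Union>F \<and>
     (\<forall>J\<in>F. int_interval J \<and> J \<subseteq> shell n \<and> (\<exists>k::nat. k \<ge> 1 \<and> ilen J = real k * real n ^ 2) \<and>
        (ilen J / 2 ^ n) powr \<sigma> \<le> (real_of_int (b - a) / 2 ^ n) powr \<rho>)"
proof -
  define m :: int where "m = int n ^ 2"
  have mr: "real_of_int m = real n ^ 2" by (simp add: m_def)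
  have m0: "m \<ge> 1" using n1 by (simp add: m_def)
  have P2: "(2::real) ^ n = 2 * 2 ^ (n - 1)" using n1 by (cases n) auto
  have P0: "(0::real) \<le> 2 ^ (n - 1)" by simp
  have Tpos: "(0::real) < 2 ^ n" by simp
  have ba_le: "real_of_int (b - a) \<le> 2 ^ n"
  proof -
    have "real_of_int (b - a) = real_of_int b - real_of_int a" by simp
    then show ?thesis using ea eb P0 by linarith
  qed
  have ba1: "1 \<le> real_of_int (b - a)" using ab by simp
  show ?thesis
  proof (cases "m \<le> b - a")
    case True
    define k where "k = (b - a) div m"
    have k1: "1 \<le> k"
    proof -
      have "m div m \<le> (b - a) div m" using True m0 by (intro zdiv_mono1) auto
      then show ?thesis using m0 by (simp add: k_def)
    qed
    have dm: "b - a = k * m + (b - a) mod m" by (simp add: k_def)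
    have md0: "0 \<le> (b - a) mod m" and md1: "(b - a) mod m < m" using m0 by simp_all
    have mkm: "m \<le> k * m" using k1 m0 by simp
    have km: "k * m \<le> b - a" using dm md0 by linarith
    have km2: "b - a < 2 * (k * m)" using dm md1 mkm by linarith
    define J1 where "J1 = Jint n a (a + k * m)"
    define J2 where "J2 = Jint n (b - k * m) b"
    have c1: "a < a + k * m" using mkm m0 by linarith
    have c2: "real_of_int (a + k * m) \<le> 2 ^ n"
    proof -
      have "a + k * m \<le> b" using km by linarith
      then have "real_of_int (a + k * m) \<le> real_of_int b" by linarith
      then show ?thesis using eb by linarith
    qed
    have c3: "b - k * m < b" using mkm m0 by linarith
    have c4: "2 ^ (n - 1) \<le> real_of_int (b - k * m)"
    proof -
      have "a \<le> b - k * m" using km by linarith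
      then have "real_of_int a \<le> real_of_int (b - k * m)" by linarith
      then show ?thesis using ea by linarith
    qed
    have len: "real_of_int (k * m) = real (nat k) * real n ^ 2"
      using k1 mr by (simp add: of_nat_nat)
    have cost: "(real_of_int (k * m) / 2 ^ n) powr \<sigma> \<le> (real_of_int (b - a) / 2 ^ n) powr \<rho>"
    proof -
      define x where "x = real_of_int (k * m) / 2 ^ n"
      have x0: "0 \<le> x" using k1 m0 unfolding x_def by simp
      have "real_of_int (k * m) \<le> real_of_int (b - a)" using km by linarith
      then have xle: "x \<le> real_of_int (b - a) / 2 ^ n" unfolding x_def
        by (simp add: divide_right_mono)
      also have "\<dots> \<le> 1" using ba_le by simp
      finally have x1: "x \<le> 1" .
      have "x powr \<sigma> \<le> x powr \<rho>" using rs x0 x1 by (rule powr_mono')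
      also have "\<dots> \<le> (real_of_int (b - a) / 2 ^ n) powr \<rho>" using r0 x0 xle by (rule powr_mono2)
      finally show ?thesis unfolding x_def .
    qed
    have cov: "{real_of_int a..real_of_int b} \<inter> shell n \<subseteq> J1 \<union> J2"
    proof
      fix y assume y: "y \<in> {real_of_int a..real_of_int b} \<inter> shell n"
      have "real_of_int (b - k * m) \<le> real_of_int (a + k * m)" using km2 by linarith
      then have "y \<le> real_of_int (a + k * m) \<or> real_of_int (b - k * m) \<le> y" by linarith
      then show "y \<in> J1 \<union> J2" using y unfolding J1_def J2_def Jint_def by auto
    qed
    show ?thesis
    proof (intro exI[of _ "{J1, J2}"] conjI)
      show "finite {J1, J2}" by simp
      show "card {J1, J2} \<le> 2" by (simp add: card_insert_if)
      show "{real_of_int a..real_of_int b} \<inter> shell n \<subseteq> \<Union>{J1, J2}" using cov by simp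
      have p1: "int_interval J1 \<and> J1 \<subseteq> shell n \<and> ilen J1 = real_of_int (k * m)"
        using Jint_props[OF c1 ea c2] unfolding J1_def by simp
      have p2: "int_interval J2 \<and> J2 \<subseteq> shell n \<and> ilen J2 = real_of_int (k * m)"
        using Jint_props[OF c3 c4 eb] unfolding J2_def by simp
      have nk: "nat k \<ge> 1" using k1 by simp
      show "\<forall>J\<in>{J1, J2}. int_interval J \<and> J \<subseteq> shell n \<and>
          (\<exists>k::nat. k \<ge> 1 \<and> ilen J = real k * real n ^ 2) \<and>
          (ilen J / 2 ^ n) powr \<sigma> \<le> (real_of_int (b - a) / 2 ^ n) powr \<rho>"
        using p1 p2 nk len cost by auto
    qed
  next
    case False
    then have bam: "b - a < m" by simp
    define c where "c = min a (2 ^ n - m)"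
    have rc: "real_of_int (2 ^ n - m) = 2 ^ n - real n ^ 2" using mr by simp
    have c_lo: "2 ^ (n - 1) \<le> real_of_int c"
    proof -
      have h: "2 ^ (n - 1) \<le> real_of_int (2 ^ n - m)" unfolding rc using nn P2 by linarith
      have "c = a \<or> c = 2 ^ n - m" unfolding c_def by (simp add: min_def)
      then show ?thesis using h ea by metis
    qed
    have c_a: "c \<le> a" unfolding c_def by simp
    have c_m: "c + m \<le> 2 ^ n" unfolding c_def by simp
    have c_b: "b \<le> c + m"
    proof -
      have "real_of_int b \<le> real_of_int ((2::int) ^ n)" using eb by simp
      then have b2: "b \<le> 2 ^ n" by (simp only: of_int_le_iff)
      show ?thesis unfolding c_def using bam b2 by (simp add: min_def)
    qed
    have d1: "c < c + m" using m0 by simp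
    have d2: "real_of_int (c + m) \<le> 2 ^ n"
    proof -
      have "real_of_int (c + m) \<le> real_of_int ((2::int) ^ n)" using c_m by linarith
      then show ?thesis by simp
    qed
    define J where "J = Jint n c (c + m)"
    have p: "int_interval J \<and> J \<subseteq> shell n \<and> ilen J = real n ^ 2"
      using Jint_props[OF d1 c_lo d2] mr unfolding J_def by simp
    have cov: "{real_of_int a..real_of_int b} \<inter> shell n \<subseteq> J"
    proof
      fix y assume y: "y \<in> {real_of_int a..real_of_int b} \<inter> shell n"
      have "real_of_int c \<le> real_of_int a" using c_a by linarith
      moreover have "real_of_int b \<le> real_of_int (c + m)" using c_b by linarith
      ultimately show "y \<in> J" using y unfolding J_def Jint_def by auto
    qed
    have cost: "(real n ^ 2 / 2 ^ n) powr \<sigma> \<le> (real_of_int (b - a) / 2 ^ n) powr \<rho>"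
    proof -
      have "1 / 2 ^ n \<le> real_of_int (b - a) / (2::real) ^ n"
        using ba1 by (simp add: divide_right_mono)
      then have "(1 / 2 ^ n) powr \<rho> \<le> (real_of_int (b - a) / 2 ^ n) powr \<rho>"
        using r0 by (intro powr_mono2) auto
      then show ?thesis using H by linarith
    qed
    show ?thesis
    proof (intro exI[of _ "{J}"] conjI)
      show "finite {J}" by simp
      show "card {J} \<le> 2" by simp
      show "{real_of_int a..real_of_int b} \<inter> shell n \<subseteq> \<Union>{J}" using cov by simp
      show "\<forall>J'\<in>{J}. int_interval J' \<and> J' \<subseteq> shell n \<and>
          (\<exists>k::nat. k \<ge> 1 \<and> ilen J' = real k * real n ^ 2) \<and>
          (ilen J' / 2 ^ n) powr \<sigma> \<le> (real_of_int (b - a) / 2 ^ n) powr \<rho>"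
        using p cost by (auto intro!: exI[of _ 1])
    qed
  qed
qed

lemma nu_tilde_le:
  fixes n :: nat and \<rho> \<sigma> :: real
  assumes n1: "n \<ge> 1" and nn: "real n ^ 2 * 2 \<le> 2 ^ n"
    and r0: "0 \<le> \<rho>" and rs: "\<rho> \<le> \<sigma>"
    and H: "(real n ^ 2 / 2 ^ n) powr \<sigma> \<le> (1 / 2 ^ n) powr \<rho>"
  shows "nu_tilde n \<sigma> E \<le> 2 * nu n \<rho> E"
  unfolding nu_def
proof (rule ennreal_le_2_Inf)
  fix x assume "x \<in> {ennreal (\<Sum>Q\<in>QQ. (ilen Q / 2 ^ n) powr \<rho>) | QQ.
      finite QQ \<and> (\<forall>Q\<in>QQ. int_interval Q \<and> Q \<subseteq> shell n) \<and> E \<inter> shell n \<subseteq> \<Union>QQ}"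
  then obtain QQ where x: "x = ennreal (\<Sum>Q\<in>QQ. (ilen Q / 2 ^ n) powr \<rho>)"
    and fin: "finite QQ" and QQi: "\<forall>Q\<in>QQ. int_interval Q \<and> Q \<subseteq> shell n"
    and cov: "E \<inter> shell n \<subseteq> \<Union>QQ" by blast
  have "\<forall>Q\<in>QQ. \<exists>ab::int\<times>int. fst ab < snd ab \<and>
      {real_of_int (fst ab)<..<real_of_int (snd ab)} \<subseteq> Q \<and> Q \<subseteq> {real_of_int (fst ab)..real_of_int (snd ab)}"
    using QQi unfolding int_interval_def by force
  then obtain AB where AB: "\<And>Q. Q \<in> QQ \<Longrightarrow> fst (AB Q) < snd (AB Q) \<and>
      {real_of_int (fst (AB Q))<..<real_of_int (snd (AB Q))} \<subseteq> Q \<and>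
      Q \<subseteq> {real_of_int (fst (AB Q))..real_of_int (snd (AB Q))}"
    by metis
  define A where "A Q = fst (AB Q)" for Q
  define B where "B Q = snd (AB Q)" for Q
  have ABQ: "\<And>Q. Q \<in> QQ \<Longrightarrow> A Q < B Q \<and> {real_of_int (A Q)<..<real_of_int (B Q)} \<subseteq> Q \<and>
      Q \<subseteq> {real_of_int (A Q)..real_of_int (B Q)}" using AB unfolding A_def B_def by blast
  have ilenQ: "\<And>Q. Q \<in> QQ \<Longrightarrow> ilen Q = real_of_int (B Q - A Q)"
  proof -
    fix Q assume "Q \<in> QQ"
    note h = ABQ[OF this]
    have "real_of_int (A Q) < real_of_int (B Q)" using h by simp
    then show "ilen Q = real_of_int (B Q - A Q)" using sandwich_ilen[of "real_of_int (A Q)" "real_of_int (B Q)" Q] h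
      by simp
  qed
  have "\<forall>Q\<in>QQ. \<exists>F. finite F \<and> card F \<le> 2 \<and> {real_of_int (A Q)..real_of_int (B Q)} \<inter> shell n \<subseteq> \<Union>F \<and>
     (\<forall>J\<in>F. int_interval J \<and> J \<subseteq> shell n \<and> (\<exists>k::nat. k \<ge> 1 \<and> ilen J = real k * real n ^ 2) \<and>
        (ilen J / 2 ^ n) powr \<sigma> \<le> (real_of_int (B Q - A Q) / 2 ^ n) powr \<rho>)"
  proof
    fix Q assume Q: "Q \<in> QQ"
    note h = ABQ[OF Q]
    have Qs: "Q \<subseteq> shell n" using QQi Q by blast
    have e1: "2 ^ (n - 1) \<le> real_of_int (A Q)" "real_of_int (B Q) \<le> 2 ^ n"
      using endpoints_in_shell[of "A Q" "B Q" Q n] h Qs by auto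
    show "\<exists>F. finite F \<and> card F \<le> 2 \<and> {real_of_int (A Q)..real_of_int (B Q)} \<inter> shell n \<subseteq> \<Union>F \<and>
     (\<forall>J\<in>F. int_interval J \<and> J \<subseteq> shell n \<and> (\<exists>k::nat. k \<ge> 1 \<and> ilen J = real k * real n ^ 2) \<and>
        (ilen J / 2 ^ n) powr \<sigma> \<le> (real_of_int (B Q - A Q) / 2 ^ n) powr \<rho>)"
      using piece[OF n1 nn _ e1(1) e1(2) r0 rs H] h by blast
  qed
  then obtain FF where FF: "\<And>Q. Q \<in> QQ \<Longrightarrow> finite (FF Q) \<and> card (FF Q) \<le> 2 \<and>
      {real_of_int (A Q)..real_of_int (B Q)} \<inter> shell n \<subseteq> \<Union>(FF Q) \<and>
     (\<forall>J\<in>FF Q. int_interval J \<and> J \<subseteq> shell n \<and> (\<exists>k::nat. k \<ge> 1 \<and> ilen J = real k * real n ^ 2) \<and>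
        (ilen J / 2 ^ n) powr \<sigma> \<le> (real_of_int (B Q - A Q) / 2 ^ n) powr \<rho>)"
    by metis
  define QQ' where "QQ' = (\<Union>Q\<in>QQ. FF Q)"
  have fin': "finite QQ'" unfolding QQ'_def using fin FF by blast
  have prop': "\<forall>J\<in>QQ'. int_interval J \<and> J \<subseteq> shell n \<and> (\<exists>k::nat. k \<ge> 1 \<and> ilen J = real k * real n ^ 2)"
    unfolding QQ'_def using FF by blast
  have cov': "E \<inter> shell n \<subseteq> \<Union>QQ'"
  proof
    fix y assume y: "y \<in> E \<inter> shell n"
    then obtain Q where Q: "Q \<in> QQ" "y \<in> Q" using cov by blast
    then have "y \<in> {real_of_int (A Q)..real_of_int (B Q)} \<inter> shell n" using ABQ[OF Q(1)] y by blast
    then have "y \<in> \<Union>(FF Q)" using FF[OF Q(1)] by blast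
    then show "y \<in> \<Union>QQ'" unfolding QQ'_def using Q(1) by blast
  qed
  have mem: "ennreal (\<Sum>J\<in>QQ'. (ilen J / 2 ^ n) powr \<sigma>) \<in> {ennreal (\<Sum>Q\<in>QQ. (ilen Q / 2 ^ n) powr \<sigma>) | QQ.
      finite QQ \<and> (\<forall>Q\<in>QQ. int_interval Q \<and> Q \<subseteq> shell n
                        \<and> (\<exists>k::nat. k \<ge> 1 \<and> ilen Q = real k * real n ^ 2))
      \<and> E \<inter> shell n \<subseteq> \<Union>QQ}"
    using fin' prop' cov' by blast
  have s1: "(\<Sum>J\<in>QQ'. (ilen J / 2 ^ n) powr \<sigma>) \<le> (\<Sum>Q\<in>QQ. \<Sum>J\<in>FF Q. (ilen J / 2 ^ n) powr \<sigma>)"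
    unfolding QQ'_def using sum_UN_le[of QQ FF "\<lambda>J. (ilen J / 2 ^ n) powr \<sigma>"] fin FF by simp
  also have "\<dots> \<le> (\<Sum>Q\<in>QQ. 2 * (ilen Q / 2 ^ n) powr \<rho>)"
  proof (rule sum_mono)
    fix Q assume Q: "Q \<in> QQ"
    have "(\<Sum>J\<in>FF Q. (ilen J / 2 ^ n) powr \<sigma>) \<le> of_nat (card (FF Q)) * (ilen Q / 2 ^ n) powr \<rho>"
      using FF[OF Q] ilenQ[OF Q] by (intro sum_bounded_above) auto
    also have "\<dots> \<le> 2 * (ilen Q / 2 ^ n) powr \<rho>"
      using FF[OF Q] by (intro mult_right_mono) auto
    finally show "(\<Sum>J\<in>FF Q. (ilen J / 2 ^ n) powr \<sigma>) \<le> 2 * (ilen Q / 2 ^ n) powr \<rho>" .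
  qed
  also have "\<dots> = 2 * (\<Sum>Q\<in>QQ. (ilen Q / 2 ^ n) powr \<rho>)" by (simp add: sum_distrib_left)
  finally have s: "(\<Sum>J\<in>QQ'. (ilen J / 2 ^ n) powr \<sigma>) \<le> 2 * (\<Sum>Q\<in>QQ. (ilen Q / 2 ^ n) powr \<rho>)" .
  have "nu_tilde n \<sigma> E \<le> ennreal (\<Sum>J\<in>QQ'. (ilen J / 2 ^ n) powr \<sigma>)"
    unfolding nu_tilde_def using mem by (rule Inf_lower)
  also have "\<dots> \<le> ennreal (2 * (\<Sum>Q\<in>QQ. (ilen Q / 2 ^ n) powr \<rho>))"
    using s by (rule ennreal_leI)
  also have "\<dots> = 2 * x" unfolding x
    by (simp add: ennreal_mult sum_nonneg)
  finally show "nu_tilde n \<sigma> E \<le> 2 * x" .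
qed

lemma nu_le_nu_tilde: "nu n \<rho> E \<le> nu_tilde n \<rho> E"
  unfolding nu_def nu_tilde_def by (rule Inf_superset_mono) blast

lemma nu_Suc_finite: "nu (Suc n) \<rho> E < \<infinity>"
proof -
  have ii: "int_interval (shell (Suc n))"
    unfolding int_interval_def shell_def
    by (rule exI[of _ "2 ^ n"], rule exI[of _ "2 ^ Suc n"]) auto
  have "nu (Suc n) \<rho> E \<le> ennreal (\<Sum>Q\<in>{shell (Suc n)}. (ilen Q / 2 ^ Suc n) powr \<rho>)"
    unfolding nu_def using ii by (intro Inf_lower) blast
  also have "\<dots> < \<infinity>" by simp
  finally show ?thesis .
qed

lemma tail_le: "(\<Sum>k. f (k + M)) \<le> (\<Sum>k. (f k :: ennreal))"
proof -
  have "(\<Sum>k. f k) = (\<Sum>k. f (k + M)) + sum f {..<M}"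
    by (rule suminf_offset) (rule summableI)
  then show ?thesis by (simp add: add_increasing2)
qed

theorem lemma2:
  fixes E :: "real set"
  assumes "E \<subseteq> {0..}"
  shows "DimH E = Inf {ereal \<rho> | \<rho>. \<rho> \<ge> 0 \<and>
           (\<exists>N\<ge>1. (\<Sum>k. nu_tilde (k + N) \<rho> E) < \<infinity>)}"
proof -
  define SA where "SA = {ereal \<rho> | \<rho>. \<rho> \<ge> 0 \<and> (\<Sum>n. nu (Suc n) \<rho> E) < \<infinity>}"
  define SB where "SB = {ereal \<rho> | \<rho>. \<rho> \<ge> 0 \<and>
           (\<exists>N\<ge>1. (\<Sum>k. nu_tilde (k + N) \<rho> E) < \<infinity>)}"
  have BA: "SB \<subseteq> SA"
  proof
    fix z assume "z \<in> SB"
    then obtain \<rho> N where z: "z = ereal \<rho>" and r0: "\<rho> \<ge> 0" and N1: "N \<ge> 1"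
      and fs: "(\<Sum>k. nu_tilde (k + N) \<rho> E) < \<infinity>" unfolding SB_def by blast
    have eqN: "\<And>k. Suc (k + (N - 1)) = k + N" using N1 by simp
    have "(\<Sum>k. nu (Suc (k + (N - 1))) \<rho> E) \<le> (\<Sum>k. nu_tilde (k + N) \<rho> E)"
      unfolding eqN by (intro suminf_le nu_le_nu_tilde summableI)
    then have t: "(\<Sum>k. nu (Suc (k + (N - 1))) \<rho> E) < \<infinity>" using fs by simp
    have "(\<Sum>n. nu (Suc n) \<rho> E) = (\<Sum>k. nu (Suc (k + (N - 1))) \<rho> E) + sum (\<lambda>n. nu (Suc n) \<rho> E) {..<N - 1}"
      by (rule suminf_offset) (rule summableI)
    also have "\<dots> < \<infinity>" using t nu_Suc_finite by simp
    finally show "z \<in> SA" unfolding SA_def using z r0 by blast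
  qed
  have le1: "Inf SA \<le> Inf SB" using BA by (rule Inf_superset_mono)
  have le2: "Inf SB \<le> Inf SA"
  proof (rule Inf_greatest)
    fix z assume "z \<in> SA"
    then obtain \<rho> where z: "z = ereal \<rho>" and r0: "\<rho> \<ge> 0"
      and fs: "(\<Sum>n. nu (Suc n) \<rho> E) < \<infinity>" unfolding SA_def by blast
    show "Inf SB \<le> z" unfolding z
    proof (rule ereal_le_epsilon2)
      fix e :: real assume e: "0 < e"
      define \<sigma> where "\<sigma> = \<rho> + e"
      have ev1: "eventually (\<lambda>n. real n ^ 2 * 2 \<le> 2 ^ n) at_top" by real_asymp
      have ev2: "eventually (\<lambda>n. (real n ^ 2 / 2 ^ n) powr (\<rho> + e) \<le> (1 / 2 ^ n) powr \<rho>) at_top"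
        using e by real_asymp
      have ev3: "eventually (\<lambda>n::nat. n \<ge> 1) at_top" by (rule eventually_ge_at_top)
      obtain N0 where N0: "\<And>n. n \<ge> N0 \<Longrightarrow> real n ^ 2 * 2 \<le> 2 ^ n \<and>
          (real n ^ 2 / 2 ^ n) powr (\<rho> + e) \<le> (1 / 2 ^ n) powr \<rho> \<and> n \<ge> 1"
        using eventually_conj[OF ev1 eventually_conj[OF ev2 ev3]]
        unfolding eventually_at_top_linorder by blast
      have bnd: "\<And>k. nu_tilde (k + Suc N0) \<sigma> E \<le> 2 * nu (Suc (k + N0)) \<rho> E"
      proof -
        fix k
        have h: "real (k + Suc N0) ^ 2 * 2 \<le> 2 ^ (k + Suc N0) \<and>
          (real (k + Suc N0) ^ 2 / 2 ^ (k + Suc N0)) powr (\<rho> + e) \<le> (1 / 2 ^ (k + Suc N0)) powr \<rho> \<and>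
          k + Suc N0 \<ge> 1" using N0[of "k + Suc N0"] by simp
        have "nu_tilde (k + Suc N0) \<sigma> E \<le> 2 * nu (k + Suc N0) \<rho> E"
          unfolding \<sigma>_def using h e r0 by (intro nu_tilde_le) auto
        then show "nu_tilde (k + Suc N0) \<sigma> E \<le> 2 * nu (Suc (k + N0)) \<rho> E" by simp
      qed
      have "(\<Sum>k. nu_tilde (k + Suc N0) \<sigma> E) \<le> (\<Sum>k. 2 * nu (Suc (k + N0)) \<rho> E)"
        using bnd by (intro suminf_le summableI) auto
      also have "\<dots> = 2 * (\<Sum>k. nu (Suc (k + N0)) \<rho> E)" by (rule ennreal_suminf_cmult)
      also have "\<dots> \<le> 2 * (\<Sum>n. nu (Suc n) \<rho> E)"
        using tail_le[of "\<lambda>n. nu (Suc n) \<rho> E" N0] by (intro mult_left_mono) auto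
      also have "\<dots> < \<infinity>" using fs by (simp add: ennreal_mult_less_top)
      finally have "(\<Sum>k. nu_tilde (k + Suc N0) \<sigma> E) < \<infinity>" .
      then have "ereal \<sigma> \<in> SB" unfolding SB_def using r0 e \<sigma>_def
        by (intro CollectI exI[of _ \<sigma>] conjI) (auto intro!: exI[of _ "Suc N0"])
      then have "Inf SB \<le> ereal \<sigma>" by (rule Inf_lower)
      then show "Inf SB \<le> ereal \<rho> + ereal e" unfolding \<sigma>_def by simp
    qed
  qed
  have "DimH E = Inf SA" unfolding DimH_def SA_def by simp
  also have "\<dots> = Inf SB" using le1 le2 by (rule antisym)
  finally show ?thesis unfolding SB_def .
qed

end
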